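(* In the setting of the context, let $\varepsilon\in(0,1)$, $\delta\in(0,1/2)$, and assume that $|u_N(x,y)|<\delta$ for some $x\in[-3N,3N]\setminus X_0$ and some $y$ with $1-|y|<\varepsilon$. Then $H_x(u_N(x,\cdot))\ge\frac{(f_N(x)-\delta)^2}{\varepsilon}$. In particular, if $x\in[-3N,3N]\setminus X_0$ and there exists $y$ with $1-|y|<\frac{1}{44}$ and $|u_N(x,y)|<\frac14$, then $H_x(u_N(x,\cdot))\ge H_x(v_N(x,\cdot))+1$.
   Context: Fix a small universal constant $\alpha\in(0,1)$ (e.g. $\alpha=1/10$). For $N>0$ let $\overline{R}_N=[-3N,3N]\times[-1,1]$ with coordinates $(x,y)$, and $f_N(x)=1-\alpha$ if $|x|\le N$, $f_N(x)=\frac{|x|(1+\alpha)}{N}-2\alpha$ if $N\le|x|\le2N$, $f_N(x)=2$ if $2N\le|x|\le3N$. Let $J(w)=\iint_{\overline{R}_N}|\nabla w|^2+|\{w\neq0\}|$ and let $u_N$ be any minimizer of $J$ among $w\in W^{1,2}(\overline{R}_N)$ with $w(x,\pm1)=\pm f_N(x)$ (no condition on vertical sides). For $x\in[-3N,3N]$, $H_x(w)=\int_{-1}^1(w')^2dy+|\{w\ne0\}\cap[-1,1]|$ for $w\in W^{1,2}([-1,1])$; $v_N(x,\cdot)$ is the unique minimizer of $H_x$ with $w(\pm1)=\pm f_N(x)$. $X_0\subset[-3N,3N]$ is the smallest set such that for $x\notin X_0$, $u_N(x,\cdot)\in W^{1,2}([-1,1])$ and $\lim_{y\to\pm1}u_N(x,y)=\pm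 f_N(x)$ (it has measure zero). *)

theory Defs
  imports "HOL-Analysis.Analysis"
begin

definition fN :: "real \<Rightarrow> real \<Rightarrow> real \<Rightarrow> real" where
  "fN \<alpha> N x =
     (if \<bar>x\<bar> \<le> N then 1 - \<alpha>
      else if \<bar>x\<bar> \<le> 2 * N then \<bar>x\<bar> * (1 + \<alpha>) / N - 2 * \<alpha>
      else 2)"

definition rectN :: "real \<Rightarrow> (real \<times> real) set" where
  "rectN N = {-3 * N .. 3 * N} \<times> {-1 .. 1}"

definition test_fun :: "(real \<times> real) set \<Rightarrow> (real \<times> real \<Rightarrow> real) \<Rightarrow> (real \<times> real \<Rightarrow> real \<times> real) \<Rightarrow> bool" where
  "test_fun R \<phi> \<phi>' \<longleftrightarrow>
     (\<exists>K. compact K \<and> K \<subseteq> interior R \<and> (\<forall>z. z \<notin> K \<longrightarrow> \<phi> z = 0)) \<and>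
     (\<forall>z. (\<phi> has_derivative (\<lambda>h. \<phi>' z \<bullet> h)) (at z)) \<and> continuous_on UNIV \<phi>'"

definition L2_on :: "(real \<times> real) set \<Rightarrow> (real \<times> real \<Rightarrow> real) \<Rightarrow> bool" where
  "L2_on R g \<longleftrightarrow> set_borel_measurable lebesgue R g \<and> set_integrable lebesgue R (\<lambda>z. (g z)\<^sup>2)"

definition weak_grad :: "(real \<times> real) set \<Rightarrow> (real \<times> real \<Rightarrow> real) \<Rightarrow> (real \<times> real \<Rightarrow> real) \<Rightarrow> (real \<times> real \<Rightarrow> real) \<Rightarrow> bool" where
  "weak_grad R w g1 g2 \<longleftrightarrow>
     (\<forall>\<phi> \<phi>'. test_fun R \<phi> \<phi>' \<longrightarrow>
        set_lebesgue_integral lebesgue R (\<lambda>z. w z * fst (\<phi>' z)) = - set_lebesgue_integral lebesgue R (\<lambda>z. g1 z * \<phi> z) \<and>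
        set_lebesgue_integral lebesgue R (\<lambda>z. w z * snd (\<phi>' z)) = - set_lebesgue_integral lebesgue R (\<lambda>z. g2 z * \<phi> z))"

definition W12_2D :: "(real \<times> real) set \<Rightarrow> (real \<times> real \<Rightarrow> real) \<Rightarrow> bool" where
  "W12_2D R w \<longleftrightarrow> L2_on R w \<and> (\<exists>g1 g2. L2_on R g1 \<and> L2_on R g2 \<and> weak_grad R w g1 g2)"

(* Dirichlet energy \<integral>_R |\<nabla>w|^2 (the weak gradient is unique a.e.) *)
definition dirichlet :: "(real \<times> real) set \<Rightarrow> (real \<times> real \<Rightarrow> real) \<Rightarrow> real" where
  "dirichlet R w = (SOME d. \<exists>g1 g2. L2_on R g1 \<and> L2_on R g2 \<and> weak_grad R w g1 g2 \<and>
       d = set_lebesgue_integral lebesgue R (\<lambda>z. (g1 z)\<^sup>2 + (g2 z)\<^sup>2))"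

definition JN :: "real \<Rightarrow> (real \<times> real \<Rightarrow> real) \<Rightarrow> real" where
  "JN N w = dirichlet (rectN N) w + measure lebesgue {z \<in> rectN N. w z \<noteq> 0}"

(* boundary condition w(x,\<plusminus>1) = \<plusminus>f_N(x) in the trace sense: some representative of w
   (equal to w a.e. on R) has, for a.e. x, vertical limits \<plusminus>f_N(x) at y = \<plusminus>1 *)
definition bc_N :: "real \<Rightarrow> real \<Rightarrow> (real \<times> real \<Rightarrow> real) \<Rightarrow> bool" where
  "bc_N \<alpha> N w \<longleftrightarrow> (\<exists>w'. (AE z in lebesgue. z \<in> rectN N \<longrightarrow> w' z = w z) \<and>
      (AE x in lebesgue. x \<in> {-3 * N .. 3 * N} \<longrightarrow>
         ((\<lambda>y. w' (x, y)) \<longlongrightarrow> fN \<alpha> N x) (at_left 1) \<and>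
         ((\<lambda>y. w' (x, y)) \<longlongrightarrow> - fN \<alpha> N x) (at_right (-1))))"

definition is_minimizer_J :: "real \<Rightarrow> real \<Rightarrow> (real \<times> real \<Rightarrow> real) \<Rightarrow> bool" where
  "is_minimizer_J \<alpha> N u \<longleftrightarrow> W12_2D (rectN N) u \<and> bc_N \<alpha> N u \<and>
     (\<forall>w. W12_2D (rectN N) w \<and> bc_N \<alpha> N w \<longrightarrow> JN N u \<le> JN N w)"

definition W12_deriv :: "(real \<Rightarrow> real) \<Rightarrow> (real \<Rightarrow> real) \<Rightarrow> bool" where
  "W12_deriv w g \<longleftrightarrow> g \<in> borel_measurable lborel \<and>
     set_integrable lborel {-1..1} g \<and> set_integrable lborel {-1..1} (\<lambda>y. (g y)\<^sup>2) \<and>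
     (\<forall>y \<in> {-1<..<1}. w y = w 0 + interval_lebesgue_integral lborel 0 y g)"

definition W12_1D :: "(real \<Rightarrow> real) \<Rightarrow> bool" where
  "W12_1D w \<longleftrightarrow> (\<exists>g. W12_deriv w g)"

definition Hfun :: "(real \<Rightarrow> real) \<Rightarrow> real" where
  "Hfun w = (SOME h. \<exists>g. W12_deriv w g \<and>
      h = set_lebesgue_integral lborel {-1..1} (\<lambda>y. (g y)\<^sup>2) + measure lborel {y \<in> {-1..1}. w y \<noteq> 0})"

definition admissible_H :: "real \<Rightarrow> real \<Rightarrow> real \<Rightarrow> (real \<Rightarrow> real) \<Rightarrow> bool" where
  "admissible_H \<alpha> N x w \<longleftrightarrow> W12_1D w \<and>
     (w \<longlongrightarrow> fN \<alpha> N x) (at_left 1) \<and> (w \<longlongrightarrow> - fN \<alpha> N x) (at_right (-1))"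

definition is_minimizer_H :: "real \<Rightarrow> real \<Rightarrow> real \<Rightarrow> (real \<Rightarrow> real) \<Rightarrow> bool" where
  "is_minimizer_H \<alpha> N x v \<longleftrightarrow> admissible_H \<alpha> N x v \<and>
     (\<forall>w. admissible_H \<alpha> N x w \<longrightarrow> Hfun v \<le> Hfun w)"

definition X0 :: "real \<Rightarrow> real \<Rightarrow> (real \<times> real \<Rightarrow> real) \<Rightarrow> real set" where
  "X0 \<alpha> N u = {x \<in> {-3 * N .. 3 * N}. \<not> admissible_H \<alpha> N x (\<lambda>y. u (x, y))}"

end

theory Submission
  imports Defs
begin

lemma W12_int:
  assumes "W12_deriv w g"
  shows "g integrable_on {-1..1}" "(\<lambda>y. (g y)\<^sup>2) integrable_on {-1..1}"
    "set_lebesgue_integral lborel {-1..1} (\<lambda>y. (g y)\<^sup>2) = integral {-1..1} (\<lambda>y. (g y)\<^sup>2)"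
  using assms set_borel_integral_eq_integral unfolding W12_deriv_def by auto

lemma W12_repr:
  assumes "W12_deriv w g" and t: "t \<in> {-1<..<1}"
  shows "w t = w 0 - integral {-1..0} g + integral {-1..t} g"
proof -
  have si: "set_integrable lborel {-1..1} g" using assms unfolding W12_deriv_def by auto
  have gi: "g integrable_on {-1..1}" using W12_int[OF assms(1)] by auto
  have "\<forall>y \<in> {-1<..<1}. w y = w 0 + interval_lebesgue_integral lborel 0 y g" using assms(1) unfolding W12_deriv_def by blast
  then have wt: "w t = w 0 + interval_lebesgue_integral lborel 0 t g" using t by blast
  show ?thesis
  proof (cases "0 \<le> t")
    case True
    have s: "set_integrable lborel {0..t} g" by (rule set_integrable_subset[OF si]) (use t in auto)
    have "interval_lebesgue_integral lborel 0 t g = integral {0..t} g"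
      using interval_integral_Icc[OF True, of g] set_borel_integral_eq_integral(2)[OF s]
      by (simp add: zero_ereal_def)
    moreover have "integral {-1..0} g + integral {0..t} g = integral {-1..t} g"
      by (rule Henstock_Kurzweil_Integration.integral_combine) (use True t integrable_on_subinterval[OF gi, of "-1" t] in auto)
    ultimately show ?thesis using wt by simp
  next
    case False
    have s: "set_integrable lborel {t..0} g" by (rule set_integrable_subset[OF si]) (use t in auto)
    have "interval_lebesgue_integral lborel 0 t g = - integral {t..0} g"
      using interval_integral_endpoints_reverse[of 0 t g] interval_integral_Icc[of t 0 g] False set_borel_integral_eq_integral(2)[OF s]
      by (simp add: zero_ereal_def)
    moreover have "integral {-1..t} g + integral {t..0} g = integral {-1..0} g"
      by (rule Henstock_Kurzweil_Integration.integral_combine) (use False t integrable_on_subinterval[OF gi, of "-1" 0] in auto)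
    ultimately show ?thesis using wt by simp
  qed
qed

lemma W12_bdry:
  assumes d: "W12_deriv w g"
    and l1: "(w \<longlongrightarrow> a) (at_left 1)" and l2: "(w \<longlongrightarrow> b) (at_right (-1))"
  shows "a = w 0 - integral {-1..0} g + integral {-1..1} g" "b = w 0 - integral {-1..0} g"
proof -
  let ?K = "w 0 - integral {-1..0} g"
  have gi: "g integrable_on {-1..1}" using W12_int[OF d] by auto
  have c: "continuous_on {-1..1} (\<lambda>x. ?K + integral {-1..x} g)"
    by (rule continuous_on_add[OF continuous_on_const indefinite_integral_continuous_1[OF gi]])
  have ev1: "eventually (\<lambda>x. x \<in> {-1<..<1}) (at_left (1::real))" by (rule eventually_at_left_real) simp
  have ev2: "eventually (\<lambda>x. x \<in> {-1<..<1}) (at_right (-1::real))" by (rule eventually_at_right_real) simp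
  have e1: "eventually (\<lambda>x. ?K + integral {-1..x} g = w x) (at_left 1)"
    using ev1 by (rule eventually_mono) (metis W12_repr[OF d])
  have e2: "eventually (\<lambda>x. ?K + integral {-1..x} g = w x) (at_right (-1))"
    using ev2 by (rule eventually_mono) (metis W12_repr[OF d])
  have "(w \<longlongrightarrow> ?K + integral {-1..1} g) (at_left 1)"
    using Lim_transform_eventually[OF continuous_on_Icc_at_leftD[OF c] e1] by simp
  then show "a = ?K + integral {-1..1} g" using l1 tendsto_unique trivial_limit_at_left_real by blast
  have "(w \<longlongrightarrow> ?K + integral {-1..-1} g) (at_right (-1))"
    using Lim_transform_eventually[OF continuous_on_Icc_at_rightD[OF c] e2] by simp
  then show "b = ?K" using l2 tendsto_unique trivial_limit_at_right_real by fastforce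
qed

lemma quad_bound:
  fixes g :: "real \<Rightarrow> real"
  assumes gi: "g integrable_on {a..b}" and g2: "(\<lambda>t. (g t)\<^sup>2) integrable_on {a..b}" and ab: "a < b"
  shows "integral {a..b} (\<lambda>t. (g t)\<^sup>2) \<ge> (integral {a..b} g)\<^sup>2 / (b - a)"
proof -
  define D where "D = integral {a..b} g"
  define k where "k = D / (b - a)"
  have e: "(\<lambda>t. (g t - k)\<^sup>2) = (\<lambda>t. ((g t)\<^sup>2 - 2 * k * g t) + k\<^sup>2)"
    by (auto simp: power2_eq_square algebra_simps)
  have i0: "(\<lambda>t. 2 * k * g t) integrable_on {a..b}" using integrable_on_cmult_left[OF gi, of "2*k"] by simp
  have i1: "(\<lambda>t. (g t)\<^sup>2 - 2 * k * g t) integrable_on {a..b}"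
    by (intro integrable_diff g2 i0)
  have "0 \<le> integral {a..b} (\<lambda>t. (g t - k)\<^sup>2)"
    by (rule integral_nonneg) (auto intro: integrable_continuous_real simp: e intro!: integrable_add i1)
  also have "\<dots> = integral {a..b} (\<lambda>t. (g t)\<^sup>2) - 2 * k * D + k\<^sup>2 * (b - a)"
  proof -
    have ic: "(\<lambda>t. k\<^sup>2) integrable_on {a..b}" by (rule integrable_const_ivl)
    have "integral {a..b} (\<lambda>t. ((g t)\<^sup>2 - 2 * k * g t) + k\<^sup>2) = integral {a..b} (\<lambda>t. (g t)\<^sup>2 - 2 * k * g t) + integral {a..b} (\<lambda>t. k\<^sup>2)"
      by (rule integral_add[OF i1 ic])
    moreover have "integral {a..b} (\<lambda>t. (g t)\<^sup>2 - 2 * k * g t) = integral {a..b} (\<lambda>t. (g t)\<^sup>2) - integral {a..b} (\<lambda>t. 2 * k * g t)"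
      by (rule integral_diff[OF g2 i0])
    moreover have "integral {a..b} (\<lambda>t. 2 * k * g t) = 2 * k * D" unfolding D_def by simp
    moreover have "integral {a..b} (\<lambda>t. k\<^sup>2) = k\<^sup>2 * (b - a)" using ab by simp
    ultimately show ?thesis unfolding e by linarith
  qed
  finally have "0 \<le> integral {a..b} (\<lambda>t. (g t)\<^sup>2) - 2 * k * D + k\<^sup>2 * (b - a)" .
  moreover have "2 * k * D - k\<^sup>2 * (b - a) = D\<^sup>2 / (b - a)"
  proof -
    have "\<And>L. L > 0 \<Longrightarrow> 2 * (D / L) * D - (D / L)\<^sup>2 * L = D\<^sup>2 / L"
      by (simp add: field_simps power2_eq_square)
    then show ?thesis using ab unfolding k_def by simp
  qed
  ultimately show ?thesis unfolding D_def by linarith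
qed

lemma lower_bound:
  assumes d: "W12_deriv w g"
    and l1: "(w \<longlongrightarrow> fv) (at_left 1)" and l2: "(w \<longlongrightarrow> - fv) (at_right (-1))"
    and y: "y \<in> {-1<..<1}" and ye: "1 - \<bar>y\<bar> < \<epsilon>" and wy: "\<bar>w y\<bar> < \<delta>" and dv: "\<delta> < fv"
  shows "integral {-1..1} (\<lambda>t. (g t)\<^sup>2) \<ge> (fv - \<delta>)\<^sup>2 / \<epsilon>"
proof -
  have gi: "g integrable_on {-1..1}" and g2: "(\<lambda>t. (g t)\<^sup>2) integrable_on {-1..1}" using W12_int[OF d] by auto
  note B = W12_bdry[OF d l1 l2]
  note R = W12_repr[OF d y]
  obtain a b where ab: "-1 \<le> a" "a < b" "b \<le> 1" and L: "b - a = 1 - \<bar>y\<bar>"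
    and D: "integral {a..b} g \<ge> fv - \<bar>w y\<bar>"
  proof (cases "0 \<le> y")
    case True
    have "integral {-1..y} g + integral {y..1} g = integral {-1..1} g"
      by (rule Henstock_Kurzweil_Integration.integral_combine) (use y gi in auto)
    then have "integral {y..1} g = fv - w y" using B R by linarith
    then show ?thesis using that[of y 1] y True by auto
  next
    case False
    have "integral {-1..y} g = w y + fv" using B R by linarith
    then show ?thesis using that[of "-1" y] y False by auto
  qed
  have gia: "g integrable_on {a..b}" by (rule integrable_on_subinterval[OF gi]) (use ab in auto)
  have g2a: "(\<lambda>t. (g t)\<^sup>2) integrable_on {a..b}" by (rule integrable_on_subinterval[OF g2]) (use ab in auto)
  have "integral {a..b} (\<lambda>t. (g t)\<^sup>2) \<le> integral {-1..1} (\<lambda>t. (g t)\<^sup>2)"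
    by (rule integral_subset_le[OF _ g2a g2]) (use ab in auto)
  moreover have "integral {a..b} (\<lambda>t. (g t)\<^sup>2) \<ge> (integral {a..b} g)\<^sup>2 / (b - a)"
    by (rule quad_bound[OF gia g2a ab(2)])
  moreover have "(fv - \<delta>)\<^sup>2 \<le> (integral {a..b} g)\<^sup>2"
    using D wy dv by (intro power_mono) auto
  moreover have "(fv - \<delta>)\<^sup>2 / \<epsilon> \<le> (fv - \<delta>)\<^sup>2 / (b - a)"
    using L ab ye by (intro divide_left_mono) auto
  moreover have "(fv - \<delta>)\<^sup>2 / (b - a) \<le> (integral {a..b} g)\<^sup>2 / (b - a)"
    using ab \<open>(fv - \<delta>)\<^sup>2 \<le> (integral {a..b} g)\<^sup>2\<close> by (intro divide_right_mono) auto
  ultimately show ?thesis by linarith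
qed

lemma em_density:
  fixes f :: "real \<Rightarrow> real"
  assumes f: "integrable lborel f" and nn: "\<And>t. f t \<ge> 0"
    and that: "A \<in> sets borel"
  shows "emeasure (density lborel (\<lambda>t. ennreal (f t))) A = ennreal (set_lebesgue_integral lborel A f)"
proof -
  have "emeasure (density lborel (\<lambda>t. ennreal (f t))) A = (\<integral>\<^sup>+ t. ennreal (f t) * indicator A t \<partial>lborel)"
    using that f by (intro emeasure_density) auto
  also have "\<dots> = (\<integral>\<^sup>+ t. ennreal (indicator A t *\<^sub>R f t) \<partial>lborel)"
    by (intro nn_integral_cong) (auto simp: indicator_def)
  also have "\<dots> = ennreal (integral\<^sup>L lborel (\<lambda>t. indicator A t *\<^sub>R f t))"
    using that f nn by (intro nn_integral_eq_integral integrable_mult_indicator) auto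
  finally show ?thesis by (simp add: set_lebesgue_integral_def)
qed

lemma ae_zero_of_intervals:
  fixes h :: "real \<Rightarrow> real"
  assumes hi: "integrable lborel h" and z: "\<And>x. set_lebesgue_integral lborel {x<..} h = 0"
  shows "AE t in lborel. h t = 0"
proof -
  define p where "p = (\<lambda>t. max 0 (h t))"
  define n where "n = (\<lambda>t. max 0 (- h t))"
  have ip: "integrable lborel p" unfolding p_def by (intro integrable_max hi) auto
  have inn: "integrable lborel n" unfolding n_def by (intro integrable_max integrable_minus hi) auto
  have pn: "h t = p t - n t" for t unfolding p_def n_def by auto
  have eqi: "set_lebesgue_integral lborel {x<..} p = set_lebesgue_integral lborel {x<..} n" for x
  proof -
    have "set_lebesgue_integral lborel {x<..} h = set_lebesgue_integral lborel {x<..} p - set_lebesgue_integral lborel {x<..} n"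
      unfolding set_lebesgue_integral_def pn[abs_def] scaleR_diff_right
      by (intro Bochner_Integration.integral_diff integrable_mult_indicator ip inn) auto
    then show ?thesis using z[of x] by simp
  qed
  have dens: "density lborel (\<lambda>t. ennreal (p t)) = density lborel (\<lambda>t. ennreal (n t))"
  proof (rule measure_eqI_lessThan)
    fix x :: real
    show "emeasure (density lborel (\<lambda>t. ennreal (p t))) {x<..} < \<infinity>"
      using em_density[OF ip _ , of "{x<..}"] by (simp add: p_def)
    show "emeasure (density lborel (\<lambda>t. ennreal (p t))) {x<..} = emeasure (density lborel (\<lambda>t. ennreal (n t))) {x<..}"
      using em_density[OF ip _ , of "{x<..}"] em_density[OF inn _, of "{x<..}"] eqi[of x] by (simp add: p_def n_def)
  qed auto
  have "(\<integral>\<^sup>+ t. ennreal (p t) \<partial>lborel) = ennreal (integral\<^sup>L lborel p)"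
    using ip by (intro nn_integral_eq_integral) (auto simp: p_def)
  then have "AE t in lborel. ennreal (p t) = ennreal (n t)"
    using finite_density_unique[of "\<lambda>t. ennreal (p t)" lborel "\<lambda>t. ennreal (n t)"] dens ip inn by auto
  then show ?thesis
    by eventually_elim (auto simp: p_def n_def)
qed

lemma lin_H:
  fixes c :: real
  assumes d: "W12_deriv (\<lambda>t. c * t) g"
  shows "set_lebesgue_integral lborel {-1..1} (\<lambda>y. (g y)\<^sup>2) = 2 * c\<^sup>2"
proof -
  have si: "set_integrable lborel {-1..1} g" using d unfolding W12_deriv_def by auto
  have gm: "g \<in> borel_measurable lborel" using d unfolding W12_deriv_def by auto
  have gi: "g integrable_on {-1..1}" using W12_int[OF d] by auto
  have l1: "((\<lambda>t. c * t) \<longlongrightarrow> c) (at_left 1)"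
    using tendsto_mult_left[OF tendsto_ident_at, of c 1 "{..<1}"] by simp
  have l2: "((\<lambda>t. c * t) \<longlongrightarrow> - c) (at_right (-1))"
    using tendsto_mult_left[OF tendsto_ident_at, of c "-1" "{-1<..}"] by simp
  note B = W12_bdry[OF d l1 l2]
  have G: "integral {-1..t} g = c * (t + 1)" if t: "t \<in> {-1..1}" for t
  proof -
    consider "t = -1" | "t = 1" | "t \<in> {-1<..<1}" using t by fastforce
    then show ?thesis
    proof cases
      case 1 then show ?thesis by simp
    next
      case 2 then show ?thesis using B by simp
    next
      case 3 then show ?thesis using W12_repr[OF d 3] B by (simp add: algebra_simps)
    qed
  qed
  have Iab: "integral {a..b} g = c * (b - a)" if "-1 \<le> a" "a \<le> b" "b \<le> 1" for a b
  proof -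
    have "integral {-1..a} g + integral {a..b} g = integral {-1..b} g"
      by (rule Henstock_Kurzweil_Integration.integral_combine) (use that integrable_on_subinterval[OF gi, of "-1" b] in auto)
    then show ?thesis using G[of a] G[of b] that by (simp add: algebra_simps)
  qed
  have sc: "set_integrable lborel {a..b} (\<lambda>_. c)" for a b :: real
    by (rule borel_integrable_atLeastAtMost') (rule continuous_on_const)
  have S0: "set_lebesgue_integral lborel {a..b} (\<lambda>t. g t - c) = 0" if "-1 \<le> a" "a \<le> b" "b \<le> 1" for a b
  proof -
    have s: "set_integrable lborel {a..b} g" by (rule set_integrable_subset[OF si]) (use that in auto)
    have "set_lebesgue_integral lborel {a..b} (\<lambda>t. g t - c) = integral {a..b} g - integral {a..b} (\<lambda>_. c)"
      using set_integral_diff(2)[OF s sc] set_borel_integral_eq_integral(2)[OF s] set_borel_integral_eq_integral(2)[OF sc] by simp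
    then show ?thesis using Iab[OF that] that by simp
  qed
  define h where "h = (\<lambda>t. indicator {-1..1} t * (g t - c))"
  have hi: "integrable lborel h"
    using set_integral_diff(1)[OF si sc] unfolding h_def set_integrable_def by simp
  have hz: "set_lebesgue_integral lborel {x<..} h = 0" for x
  proof -
    have "set_lebesgue_integral lborel {x<..} h = set_lebesgue_integral lborel ({x<..} \<inter> {-1..1}) (\<lambda>t. g t - c)"
      unfolding h_def set_lebesgue_integral_def by (intro Bochner_Integration.integral_cong) (auto simp: indicator_def)
    moreover consider "x < -1" | "-1 \<le> x \<and> x < 1" | "1 \<le> x" by linarith
    then have "set_lebesgue_integral lborel ({x<..} \<inter> {-1..1}) (\<lambda>t. g t - c) = 0"
    proof cases
      case 1
      then have "{x<..} \<inter> {-1..1} = {-1..1::real}" by auto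
      then show ?thesis using S0[of "-1" 1] by simp
    next
      case 2
      then have e: "{x<..} \<inter> {-1..1} = {x<..1::real}" by auto
      have "set_lebesgue_integral lborel {x<..1} (\<lambda>t. g t - c) = set_lebesgue_integral lborel {x..1} (\<lambda>t. g t - c)"
        using interval_integral_Ioc[of x 1 "\<lambda>t. g t - c"] interval_integral_Icc[of x 1 "\<lambda>t. g t - c"] 2 by simp
      then show ?thesis using S0[of x 1] 2 e by simp
    next
      case 3
      then have "{x<..} \<inter> {-1..1} = ({}::real set)" by auto
      then show ?thesis by (simp add: set_lebesgue_integral_def)
    qed
    ultimately show ?thesis by simp
  qed
  have ae: "AE t in lborel. h t = 0" by (rule ae_zero_of_intervals[OF hi hz])
  have "set_lebesgue_integral lborel {-1..1} (\<lambda>y. (g y)\<^sup>2) = set_lebesgue_integral lborel {-1..1::real} (\<lambda>y. c\<^sup>2)"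
  proof -
    have ae2: "AE y in lborel. y \<in> {-1..1} \<longrightarrow> (g y)\<^sup>2 = c\<^sup>2" using ae by eventually_elim (auto simp: h_def)
    show ?thesis using set_lebesgue_integral_cong_AE[where M=lborel and A="{-1..1}" and f="\<lambda>y. (g y)\<^sup>2" and g="\<lambda>y. c\<^sup>2"] gm ae2 by auto
  qed
  also have "\<dots> = 2 * c\<^sup>2" by (subst set_integral_const) auto
  finally show ?thesis .
qed

lemma fN_ge:
  assumes "0 < \<alpha>" "\<alpha> \<le> 1/10" "0 < N"
  shows "fN \<alpha> N x \<ge> 1 - \<alpha>"
proof -
  have "\<bar>x\<bar> * (1 + \<alpha>) / N - 2 * \<alpha> \<ge> 1 - \<alpha>" if "N < \<bar>x\<bar>"
  proof -
    have "\<bar>x\<bar> / N \<ge> 1" using that assms by simp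
    then have "\<bar>x\<bar> / N * (1 + \<alpha>) \<ge> 1 * (1 + \<alpha>)" using assms by (intro mult_right_mono) auto
    then show ?thesis by (simp add: field_simps)
  qed
  then show ?thesis using assms unfolding fN_def by auto
qed

lemma Hfun_prop:
  assumes "W12_1D w"
    and "\<And>g. W12_deriv w g \<Longrightarrow> P (set_lebesgue_integral lborel {-1..1} (\<lambda>y. (g y)\<^sup>2) + measure lborel {y \<in> {-1..1}. w y \<noteq> 0})"
  shows "P (Hfun w)"
proof -
  obtain g0 where "W12_deriv w g0" using assms(1) unfolding W12_1D_def by auto
  then have ex: "\<exists>h. \<exists>g. W12_deriv w g \<and>
      h = set_lebesgue_integral lborel {-1..1} (\<lambda>y. (g y)\<^sup>2) + measure lborel {y \<in> {-1..1}. w y \<noteq> 0}" by blast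
  show ?thesis unfolding Hfun_def using someI_ex[OF ex] assms(2) by metis
qed

lemma part1:
  assumes adm: "admissible_H \<alpha> N x w" and y: "y \<in> {-1<..<1}" and ye: "1 - \<bar>y\<bar> < \<epsilon>"
    and wy: "\<bar>w y\<bar> < \<delta>" and dv: "\<delta> < fN \<alpha> N x"
  shows "Hfun w \<ge> (fN \<alpha> N x - \<delta>)\<^sup>2 / \<epsilon>"
proof -
  have w1: "W12_1D w" and l1: "(w \<longlongrightarrow> fN \<alpha> N x) (at_left 1)" and l2: "(w \<longlongrightarrow> - fN \<alpha> N x) (at_right (-1))"
    using adm unfolding admissible_H_def by auto
  show ?thesis
  proof (rule Hfun_prop[OF w1])
    fix g assume d: "W12_deriv w g"
    have "(fN \<alpha> N x - \<delta>)\<^sup>2 / \<epsilon> \<le> set_lebesgue_integral lborel {-1..1} (\<lambda>y. (g y)\<^sup>2)"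
      using lower_bound[OF d l1 l2 y ye wy dv] W12_int(3)[OF d] by simp
    moreover have "measure lborel {y \<in> {-1..1}. w y \<noteq> 0} \<ge> 0" by simp
    ultimately show "(fN \<alpha> N x - \<delta>)\<^sup>2 / \<epsilon> \<le> set_lebesgue_integral lborel {-1..1} (\<lambda>y. (g y)\<^sup>2) + measure lborel {y \<in> {-1..1}. w y \<noteq> 0}"
      by linarith
  qed
qed

lemma lin_adm:
  fixes fv :: real
  shows "W12_deriv (\<lambda>t. fv * t) (\<lambda>_. fv)"
proof -
  have "set_integrable lborel {-1..1::real} (\<lambda>_. fv)" by (rule borel_integrable_atLeastAtMost') (rule continuous_on_const)
  moreover have "set_integrable lborel {-1..1::real} (\<lambda>_. fv\<^sup>2)" by (rule borel_integrable_atLeastAtMost') (rule continuous_on_const)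
  moreover have "fv * y = fv * 0 + interval_lebesgue_integral lborel 0 (ereal y) (\<lambda>_. fv)" for y
    using interval_integral_const(2)[of 0 y fv] by (simp add: zero_ereal_def)
  ultimately show ?thesis unfolding W12_deriv_def by auto
qed

lemma lin_Hfun:
  fixes fv :: real
  assumes "W12_1D (\<lambda>t. fv * t)"
  shows "Hfun (\<lambda>t. fv * t) \<le> 2 * fv\<^sup>2 + 2"
proof (rule Hfun_prop[OF assms])
  fix g assume d: "W12_deriv (\<lambda>t. fv * t) g"
  have "measure lborel {y \<in> {-1..1::real}. fv * y \<noteq> 0} \<le> measure lborel {-1..1::real}"
    by (rule measure_mono_fmeasurable) (auto simp: fmeasurable_def)
  then show "set_lebesgue_integral lborel {-1..1} (\<lambda>y. (g y)\<^sup>2) + measure lborel {y \<in> {-1..1}. fv * y \<noteq> 0} \<le> 2 * fv\<^sup>2 + 2"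
    using lin_H[OF d] by simp
qed

theorem lemma3p3:
  fixes \<alpha> N :: real and u :: "real \<times> real \<Rightarrow> real"
  assumes "0 < \<alpha>" and "\<alpha> \<le> 1/10" and "0 < N"
    and "is_minimizer_J \<alpha> N u"
  shows "(\<forall>\<epsilon> \<delta> x y. 0 < \<epsilon> \<and> \<epsilon> < 1 \<and> 0 < \<delta> \<and> \<delta> < 1/2 \<and>
            x \<in> {-3 * N .. 3 * N} - X0 \<alpha> N u \<and> y \<in> {-1<..<1} \<and> 1 - \<bar>y\<bar> < \<epsilon> \<and>
            \<bar>u (x, y)\<bar> < \<delta> \<longrightarrow>
            Hfun (\<lambda>t. u (x, t)) \<ge> (fN \<alpha> N x - \<delta>)\<^sup>2 / \<epsilon>)
       \<and> (\<forall>x y v. x \<in> {-3 * N .. 3 * N} - X0 \<alpha> N u \<and> y \<in> {-1<..<1} \<and> 1 - \<bar>y\<bar> < 1/44 \<and>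
            \<bar>u (x, y)\<bar> < 1/4 \<and> is_minimizer_H \<alpha> N x v \<longrightarrow>
            Hfun (\<lambda>t. u (x, t)) \<ge> Hfun v + 1)"
proof (intro conjI allI impI)
  have fge: "fN \<alpha> N x \<ge> 9/10" for x using fN_ge[OF assms(1-3), of x] assms(2) by linarith
  have admx: "admissible_H \<alpha> N x (\<lambda>t. u (x, t))" if "x \<in> {-3 * N .. 3 * N} - X0 \<alpha> N u" for x
    using that unfolding X0_def by auto
  fix \<epsilon> \<delta> x y
  assume h: "0 < \<epsilon> \<and> \<epsilon> < 1 \<and> 0 < \<delta> \<and> \<delta> < 1/2 \<and>
            x \<in> {-3 * N .. 3 * N} - X0 \<alpha> N u \<and> y \<in> {-1<..<1} \<and> 1 - \<bar>y\<bar> < \<epsilon> \<and> \<bar>u (x, y)\<bar> < \<delta>"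
  show "Hfun (\<lambda>t. u (x, t)) \<ge> (fN \<alpha> N x - \<delta>)\<^sup>2 / \<epsilon>"
    using part1[OF admx, of x y \<epsilon> \<delta>] h fge[of x] by auto
next
  have fge: "fN \<alpha> N x \<ge> 9/10" for x using fN_ge[OF assms(1-3), of x] assms(2) by linarith
  have admx: "admissible_H \<alpha> N x (\<lambda>t. u (x, t))" if "x \<in> {-3 * N .. 3 * N} - X0 \<alpha> N u" for x
    using that unfolding X0_def by auto
  fix x y v
  assume h: "x \<in> {-3 * N .. 3 * N} - X0 \<alpha> N u \<and> y \<in> {-1<..<1} \<and> 1 - \<bar>y\<bar> < 1/44 \<and>
            \<bar>u (x, y)\<bar> < 1/4 \<and> is_minimizer_H \<alpha> N x v"
  define f where "f = fN \<alpha> N x"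
  have f9: "f \<ge> 9/10" using fge unfolding f_def by auto
  have low: "Hfun (\<lambda>t. u (x, t)) \<ge> (f - 1/4)\<^sup>2 / (1/44)"
    using part1[OF admx, of x y "1/44" "1/4"] h f9 unfolding f_def by auto
  have wadm: "admissible_H \<alpha> N x (\<lambda>t. f * t)"
    unfolding admissible_H_def W12_1D_def f_def
  proof (intro conjI)
    show "\<exists>g. W12_deriv (\<lambda>t. fN \<alpha> N x * t) g" using lin_adm by blast
    show "((\<lambda>t. fN \<alpha> N x * t) \<longlongrightarrow> fN \<alpha> N x) (at_left 1)"
      using tendsto_mult_left[OF tendsto_ident_at, of "fN \<alpha> N x" 1 "{..<1}"] by simp
    show "((\<lambda>t. fN \<alpha> N x * t) \<longlongrightarrow> - fN \<alpha> N x) (at_right (-1))"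
      using tendsto_mult_left[OF tendsto_ident_at, of "fN \<alpha> N x" "-1" "{-1<..}"] by simp
  qed
  have "Hfun v \<le> Hfun (\<lambda>t. f * t)" using h wadm unfolding is_minimizer_H_def by auto
  also have "\<dots> \<le> 2 * f\<^sup>2 + 2" by (rule lin_Hfun) (use wadm in \<open>auto simp: admissible_H_def\<close>)
  finally have up: "Hfun v \<le> 2 * f\<^sup>2 + 2" .
  have low2: "Hfun (\<lambda>t. u (x, t)) \<ge> 44 * (f - 1/4)\<^sup>2" using low by simp
  have "44 * (f - 1/4)\<^sup>2 \<ge> 2 * f\<^sup>2 + 3"
  proof -
    have "42 * f * f \<ge> 42 * (9/10) * f" using f9 by (intro mult_right_mono) auto
    moreover have "44 * (f - 1/4)\<^sup>2 = 2 * f\<^sup>2 + 42 * f * f - 22 * f + 11/4"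
      by (simp add: power2_eq_square algebra_simps)
    ultimately show ?thesis using f9 by linarith
  qed
  then show "Hfun (\<lambda>t. u (x, t)) \<ge> Hfun v + 1" using low2 up by linarith
qed

end
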